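(* Let $f:\mathbb N\to\mathbb N$ be a function with $f(n)\to\infty$ as $n\to\infty$, and let $\Sigma$ be a finite alphabet with at least two letters. Then there is a right-infinite recurrent word $\mathbf w$ over $\Sigma$ such that $p_{\mathbf w}(n)\le n f(n)$ for all sufficiently large $n$, and such that $\mathbf w$ has infinitely many distinct primitive factors $y$ with the property that $y^n$ is a factor of $\mathbf w$ for every $n\ge 1$.
   Context: A factor of $\mathbf w$ is a finite block of contiguous symbols of $\mathbf w$; $p_{\mathbf w}(n)$ is the number of distinct factors of length $n$. A right-infinite word is recurrent if every factor occurs infinitely often in it. A nonempty word is primitive if it is not of the form $z^m$ with $m\ge 2$. *)

theory Defs
  imports Main
begin

definition occurs_at :: "(nat \<Rightarrow> 'a) \<Rightarrow> 'a list \<Rightarrow> nat \<Rightarrow> bool" where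
  "occurs_at w x i \<longleftrightarrow> x = map (\<lambda>k. w (i + k)) [0..<length x]"

definition is_factor :: "(nat \<Rightarrow> 'a) \<Rightarrow> 'a list \<Rightarrow> bool" where
  "is_factor w x \<longleftrightarrow> (\<exists>i. occurs_at w x i)"

definition factors_of_length :: "(nat \<Rightarrow> 'a) \<Rightarrow> nat \<Rightarrow> 'a list set" where
  "factors_of_length w n = {x. length x = n \<and> is_factor w x}"

definition complexity :: "(nat \<Rightarrow> 'a) \<Rightarrow> nat \<Rightarrow> nat" where
  "complexity w n = card (factors_of_length w n)"

definition recurrent :: "(nat \<Rightarrow> 'a) \<Rightarrow> bool" where
  "recurrent w \<longleftrightarrow> (\<forall>x. is_factor w x \<longrightarrow> infinite {i. occurs_at w x i})"

definition primitive :: "'a list \<Rightarrow> bool" where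
  "primitive y \<longleftrightarrow> y \<noteq> [] \<and> \<not> (\<exists>z m. m \<ge> 2 \<and> y = concat (replicate m z))"

end

theory Submission
  imports Defs "HOL-Library.Nat_Bijection" "HOL-Library.Infinite_Set"
begin


definition pw :: "'a list \<Rightarrow> nat \<Rightarrow> 'a list" where
  "pw x R = concat (replicate R x)"

lemma pw_0[simp]: "pw x 0 = []" by (simp add: pw_def)
lemma pw_Suc: "pw x (Suc R) = x @ pw x R" by (simp add: pw_def)
lemma pw_Suc2: "pw x (Suc R) = pw x R @ x"
  by (simp add: pw_def replicate_append_same[symmetric])
lemma length_pw[simp]: "length (pw x R) = R * length x"
  by (induction R) (auto simp: pw_Suc)

definition Fac :: "nat \<Rightarrow> 'a list \<Rightarrow> 'a list set" where
  "Fac n u = {take n (drop i u) | i. i + n \<le> length u}"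

definition sfx :: "nat \<Rightarrow> 'a list \<Rightarrow> 'a list" where
  "sfx n u = drop (length u - n) u"

lemma Fac_finite: "finite (Fac n u)" and Fac_card: "card (Fac n u) \<le> length u + 1"
proof -
  have h: "Fac n u \<subseteq> (\<lambda>i. take n (drop i u)) ` {..length u}"
    unfolding Fac_def by auto
  moreover have "card ((\<lambda>i. take n (drop i u)) ` {..length u}) \<le> length u + 1"
    using card_image_le[of "{..length u}" "\<lambda>i. take n (drop i u)"] by simp
  ultimately show "finite (Fac n u)"
    by (auto intro: finite_subset)
  from h have "card (Fac n u) \<le> card ((\<lambda>i. take n (drop i u)) ` {..length u})"
    by (rule card_mono[OF finite_imageI[OF finite_atMost]])
  then show "card (Fac n u) \<le> length u + 1"
    using card_image_le[of "{..length u}" "\<lambda>i. take n (drop i u)"] by simp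
qed

lemma Fac_sub:
  assumes "d \<le> i" "i + n \<le> d + m" "i + n \<le> length u"
  shows "take n (drop i u) \<in> Fac n (take m (drop d u))"
proof -
  have "take n (drop (i - d) (take m (drop d u))) = take (min n (m - (i - d))) (drop (i - d + d) u)"
    by (simp only: drop_take take_take drop_drop)
  moreover have "min n (m - (i - d)) = n" "i - d + d = i" using assms by auto
  ultimately have "take n (drop i u) = take n (drop (i - d) (take m (drop d u)))" by simp
  moreover have "i - d + n \<le> length (take m (drop d u))" using assms by auto
  ultimately show ?thesis unfolding Fac_def by blast
qed

lemma Fac_take_drop: "Fac n (take m (drop d u)) \<subseteq> Fac n u"
proof
  fix x assume "x \<in> Fac n (take m (drop d u))"
  then obtain i where x: "x = take n (drop i (take m (drop d u)))" "i + n \<le> length (take m (drop d u))"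
    unfolding Fac_def by auto
  have "x = take (min n (m - i)) (drop (i + d) u)"
    using x(1) by (simp only: drop_take take_take drop_drop)
  moreover have "min n (m - i) = n" using x(2) by auto
  ultimately have "x = take n (drop (i + d) u)" by simp
  moreover have "i + d + n \<le> length u \<or> n = 0" using x(2) by auto
  ultimately show "x \<in> Fac n u" unfolding Fac_def by force
qed

lemma Fac_3:
  "Fac n (A @ G @ B) \<subseteq> Fac n A \<union> Fac n B \<union> Fac n (sfx n A @ G @ take n B)"
proof
  fix x assume "x \<in> Fac n (A @ G @ B)"
  then obtain i where x: "x = take n (drop i (A @ G @ B))" and i: "i + n \<le> length (A @ G @ B)"
    unfolding Fac_def by auto
  let ?u = "A @ G @ B"
  consider "i + n \<le> length A" | "length A + length G \<le> i" | "length A < i + n" "i < length A + length G"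
    by linarith
  then show "x \<in> Fac n A \<union> Fac n B \<union> Fac n (sfx n A @ G @ take n B)"
  proof cases
    case 1
    have "x \<in> Fac n (take (length A) (drop 0 ?u))" using Fac_sub[of 0 i n "length A" ?u] 1 i x by simp
    then show ?thesis by simp
  next
    case 2
    have "x \<in> Fac n (take (length B) (drop (length A + length G) ?u))"
      using Fac_sub[of "length A + length G" i n "length B" ?u] 2 i x by simp
    then show ?thesis by simp
  next
    case 3
    let ?d = "length A - n"
    let ?m = "length A - ?d + length G + n"
    have "x \<in> Fac n (take ?m (drop ?d ?u))"
      using Fac_sub[of ?d i n ?m ?u] 3 i x by simp
    moreover have "take ?m (drop ?d ?u) = sfx n A @ G @ take n B"
      by (simp add: sfx_def)
    ultimately show ?thesis by simp
  qed
qed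

lemma Fac_pump1:
  assumes "n + length X \<le> R * length X"
  shows "Fac n (U @ pw X (Suc R) @ V) \<subseteq> Fac n (U @ pw X R @ V)"
proof
  fix x assume "x \<in> Fac n (U @ pw X (Suc R) @ V)"
  then obtain i where x: "x = take n (drop i (U @ pw X (Suc R) @ V))"
    and i: "i + n \<le> length (U @ pw X (Suc R) @ V)"
    unfolding Fac_def by auto
  show "x \<in> Fac n (U @ pw X R @ V)"
  proof (cases "i + n \<le> length U + R * length X")
    case True
    have e: "U @ pw X (Suc R) @ V = (U @ pw X R) @ (X @ V)" by (simp add: pw_Suc2)
    have t1: "take (length U + R * length X) (drop 0 (U @ pw X (Suc R) @ V)) = U @ pw X R"
      unfolding e by simp
    have t2: "take (length U + R * length X) (drop 0 (U @ pw X R @ V)) = U @ pw X R"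
      by simp
    have "x \<in> Fac n (take (length U + R * length X) (drop 0 (U @ pw X (Suc R) @ V)))"
      using Fac_sub[of 0 i n "length U + R * length X" "U @ pw X (Suc R) @ V"] True i x by simp
    then have "x \<in> Fac n (take (length U + R * length X) (drop 0 (U @ pw X R @ V)))"
      unfolding t1 t2 .
    then show ?thesis using Fac_take_drop by blast
  next
    case False
    then have ge: "length U + length X \<le> i" using assms by linarith
    have "drop i (U @ pw X (Suc R) @ V) = drop (i - length X) (U @ pw X R @ V)"
      using ge by (simp add: pw_Suc add.commute)
    then have "x = take n (drop (i - length X) (U @ pw X R @ V))" using x by simp
    moreover have "i - length X + n \<le> length (U @ pw X R @ V)" using i ge by simp
    ultimately show ?thesis unfolding Fac_def by blast
  qed
qed

lemma Fac_pump:
  assumes "n + length X \<le> c * length X"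
  shows "Fac n (U @ pw X R @ V) \<subseteq> Fac n (U @ pw X (min R c) @ V)"
proof (induction R)
  case 0 then show ?case by simp
next
  case (Suc R)
  show ?case
  proof (cases "Suc R \<le> c")
    case True then show ?thesis by simp
  next
    case False
    then have "c \<le> R" by simp
    then have "n + length X \<le> R * length X" using assms
      by (meson le_trans mult_le_mono1)
    then have "Fac n (U @ pw X (Suc R) @ V) \<subseteq> Fac n (U @ pw X R @ V)" by (rule Fac_pump1)
    also have "\<dots> \<subseteq> Fac n (U @ pw X (min R c) @ V)" by (rule Suc.IH)
    finally have "Fac n (U @ pw X (Suc R) @ V) \<subseteq> Fac n (U @ pw X (min R c) @ V)" .
    moreover have "min R c = c" "min (Suc R) c = c" using \<open>c \<le> R\<close> by auto
    ultimately show ?thesis by simp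
  qed
qed

definition Good :: "nat \<Rightarrow> 'a list \<Rightarrow> 'a list \<Rightarrow> 'a list set \<Rightarrow> 'a list \<Rightarrow> bool" where
  "Good n P Q S u \<longleftrightarrow> n \<le> length u \<and> take n u = P \<and> sfx n u = Q \<and> Fac n u \<subseteq> S"

lemma Good_join:
  assumes "Good n P Q S u" "Good n P Q S v" "Fac n (Q @ [c] @ P) \<subseteq> S"
  shows "Good n P Q S (u @ c # v)"
proof -
  have u: "n \<le> length u" "take n u = P" "sfx n u = Q" "Fac n u \<subseteq> S"
    using assms(1) unfolding Good_def by blast+
  have v: "n \<le> length v" "take n v = P" "sfx n v = Q" "Fac n v \<subseteq> S"
    using assms(2) unfolding Good_def by blast+
  have "Fac n (u @ [c] @ v) \<subseteq> Fac n u \<union> Fac n v \<union> Fac n (sfx n u @ [c] @ take n v)"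
    by (rule Fac_3)
  then have "Fac n (u @ [c] @ v) \<subseteq> Fac n u \<union> Fac n v \<union> Fac n (Q @ [c] @ P)"
    by (simp only: u(3) v(2))
  then have f: "Fac n (u @ c # v) \<subseteq> S" using u(4) v(4) assms(3) by auto
  have e: "Suc (length v) - n = Suc (length v - n)" using v(1) by simp
  have "sfx n (u @ c # v) = drop (length u + Suc (length v) - n) (u @ c # v)"
    unfolding sfx_def by simp
  also have "\<dots> = drop (Suc (length v) - n) (c # v)"
    using v(1) by simp
  also have "\<dots> = sfx n v" unfolding e sfx_def by simp
  finally have s: "sfx n (u @ c # v) = Q" using v(3) by simp
  have t: "take n (u @ c # v) = P" using u(1,2) by simp
  have l: "n \<le> length (u @ c # v)" using u(1) by simp
  show ?thesis unfolding Good_def using f s t l by blast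
qed

lemma Good_pw:
  assumes "Good n P Q S u" "Good n P Q S B" "Fac n (Q @ [c] @ P) \<subseteq> S"
  shows "Good n P Q S (u @ pw (c # B) R)"
proof (induction R)
  case 0 then show ?case using assms(1) by simp
next
  case (Suc R)
  have e: "u @ pw (c # B) (Suc R) = (u @ pw (c # B) R) @ c # B" by (simp add: pw_Suc2)
  show ?case unfolding e by (rule Good_join[OF Suc assms(2,3)])
qed



definition Nf :: "(nat \<Rightarrow> nat) \<Rightarrow> nat \<Rightarrow> nat" where
  "Nf f j = (LEAST N. \<forall>m\<ge>N. 10 * (j + 2) \<le> f m)"

definition kap :: "nat \<Rightarrow> nat" where
  "kap s = fst (prod_decode s)"

lemma kap_le: "kap s \<le> s"
  unfolding kap_def by (metis le_prod_encode_1 prod.collapse prod_decode_inverse)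

lemma kap_enc: "kap (prod_encode (k, N)) = k" and enc_ge: "N \<le> prod_encode (k, N)"
  by (simp_all add: kap_def le_prod_encode_2)

function WW :: "(nat \<Rightarrow> nat) \<Rightarrow> 'a \<Rightarrow> 'a \<Rightarrow> nat \<Rightarrow> 'a list" where
  "WW f a b 0 = []"
| "WW f a b (Suc s) = WW f a b s
     @ pw (b # WW f a b (kap s)) (Suc (Nf f (s + 2) + length (WW f a b s) + 3))
     @ pw (a # WW f a b (kap s)) (Nf f (s + 2) + length (WW f a b s) + 3)
     @ [a] @ WW f a b s"
  by pat_completeness auto
termination
  by (relation "measure (\<lambda>(f, a, b, s). s)") (auto simp: le_imp_less_Suc kap_le)

definition RR :: "(nat \<Rightarrow> nat) \<Rightarrow> 'a \<Rightarrow> 'a \<Rightarrow> nat \<Rightarrow> nat" where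
  "RR f a b s = Nf f (s + 2) + length (WW f a b s) + 3"

lemma WW_Suc': "WW f a b (Suc s) = WW f a b s
     @ pw (b # WW f a b (kap s)) (Suc (RR f a b s))
     @ pw (a # WW f a b (kap s)) (RR f a b s)
     @ [a] @ WW f a b s"
  unfolding RR_def by simp

declare WW.simps(2)[simp del]

lemma WW_len_Suc: "length (WW f a b s) + RR f a b s \<le> length (WW f a b (Suc s))"
  unfolding WW_Suc' by simp

lemma RR_ge: "length (WW f a b s) + 3 \<le> RR f a b s" "Nf f (s+2) \<le> RR f a b s"
  unfolding RR_def by auto

lemma WW_len_ge: "s \<le> length (WW f a b s)"
proof (induction s)
  case 0 then show ?case by simp
next
  case (Suc s) then show ?case using WW_len_Suc[of f a b s] RR_ge(1)[of f a b s] by linarith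
qed

lemma WW_prefix: "s \<le> t \<Longrightarrow> \<exists>r. WW f a b t = WW f a b s @ r"
proof (induction t rule: dec_induct)
  case base then show ?case by simp
next
  case (step t)
  then obtain r where "WW f a b t = WW f a b s @ r" by blast
  then show ?case unfolding WW_Suc'[of f a b t] by simp
qed

lemma WW_len_mono: "s \<le> t \<Longrightarrow> length (WW f a b s) \<le> length (WW f a b t)"
  using WW_prefix[of s t f a b] by auto

lemma pw_set: "set (pw x R) \<subseteq> set x"
  by (induction R) (auto simp: pw_Suc)

lemma WW_set: "set (WW f a b s) \<subseteq> {a, b}"
proof (induction s rule: less_induct)
  case (less s)
  show ?case
  proof (cases s)
    case 0 then show ?thesis by simp
  next
    case (Suc t)
    have "kap t < s" "t < s" using kap_le[of t] Suc by auto
    then have "set (WW f a b (kap t)) \<subseteq> {a,b}" "set (WW f a b t) \<subseteq> {a,b}" using less by auto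
    then have h1: "set (b # WW f a b (kap t)) \<subseteq> {a,b}" "set (a # WW f a b (kap t)) \<subseteq> {a,b}" by auto
    have h2: "set (pw (b # WW f a b (kap t)) R1) \<subseteq> {a,b}" "set (pw (a # WW f a b (kap t)) R2) \<subseteq> {a,b}" for R1 R2
      using pw_set[of "b # WW f a b (kap t)" R1] pw_set[of "a # WW f a b (kap t)" R2] h1 by (meson order_trans)+
    show ?thesis unfolding Suc WW_Suc' set_append using h2 \<open>set (WW f a b t) \<subseteq> {a,b}\<close>
      by (simp only: Un_subset_iff) simp
  qed
qed

lemma count_pw: "count_list (pw x R) c = R * count_list x c"
  by (induction R) (auto simp: pw_Suc)

lemma WW_count:
  assumes "a \<noteq> b"
  shows "count_list (WW f a b s) a = count_list (WW f a b s) b"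
proof (induction s rule: less_induct)
  case (less s)
  show ?case
  proof (cases s)
    case 0 then show ?thesis by simp
  next
    case (Suc t)
    have "kap t < s" "t < s" using kap_le[of t] Suc by auto
    then have h: "count_list (WW f a b (kap t)) a = count_list (WW f a b (kap t)) b"
      "count_list (WW f a b t) a = count_list (WW f a b t) b" using less by auto
    show ?thesis unfolding Suc WW_Suc' using h assms
      by (simp add: count_pw algebra_simps)
  qed
qed

definition ww :: "(nat \<Rightarrow> nat) \<Rightarrow> 'a \<Rightarrow> 'a \<Rightarrow> nat \<Rightarrow> 'a" where
  "ww f a b i = WW f a b (Suc i) ! i"

lemma ww_nth: "i < length (WW f a b t) \<Longrightarrow> ww f a b i = WW f a b t ! i"
proof -
  assume i: "i < length (WW f a b t)"
  let ?m = "max t (Suc i)"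
  obtain r1 where r1: "WW f a b ?m = WW f a b t @ r1" using WW_prefix[of t ?m f a b] by auto
  obtain r2 where r2: "WW f a b ?m = WW f a b (Suc i) @ r2" using WW_prefix[of "Suc i" ?m f a b] by auto
  have "i < length (WW f a b (Suc i))" using WW_len_ge[of "Suc i" f a b] by simp
  then have "WW f a b (Suc i) ! i = WW f a b ?m ! i" using r2 by (simp add: nth_append)
  also have "\<dots> = WW f a b t ! i" using r1 i by (simp add: nth_append)
  finally show ?thesis unfolding ww_def .
qed

lemma ww_occurs:
  assumes "i + length x \<le> length (WW f a b t)"
  shows "occurs_at (ww f a b) x i \<longleftrightarrow> x = take (length x) (drop i (WW f a b t))"
proof -
  have "map (\<lambda>k. ww f a b (i + k)) [0..<length x] = take (length x) (drop i (WW f a b t))"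
    using assms by (intro nth_equalityI) (auto simp: ww_nth)
  then show ?thesis unfolding occurs_at_def by simp
qed

lemma ww_occurs2:
  assumes "WW f a b t = u @ x @ v"
  shows "occurs_at (ww f a b) x (length u)"
  using ww_occurs[of "length u" x f a b t] assms by simp

lemma pw_shift: "pw (c # x) (Suc R) = c # pw (x @ [c]) R @ x"
  by (induction R) (auto simp: pw_Suc)

lemma pw_add: "pw x (m + k) = pw x m @ pw x k"
  by (induction m) (auto simp: pw_Suc)

lemma ww_powers:
  "is_factor (ww f a b) (concat (replicate N (WW f a b k @ [b])))"
proof -
  let ?s = "prod_encode (k, N)"
  let ?R = "RR f a b ?s"
  let ?y = "WW f a b k @ [b]"
  have "N \<le> ?s" by (rule enc_ge)
  then have NR: "N \<le> ?R" using RR_ge(1)[of f a b ?s] WW_len_ge[of ?s f a b] by linarith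
  have "pw ?y ?R = pw ?y (N + (?R - N))" using NR by simp
  then have pe: "pw ?y ?R = pw ?y N @ pw ?y (?R - N)" by (simp only: pw_add)
  have "WW f a b (Suc ?s) = (WW f a b ?s @ [b]) @ pw ?y N @ (pw ?y (?R - N) @ WW f a b k
     @ pw (a # WW f a b k) ?R @ [a] @ WW f a b ?s)"
    unfolding WW_Suc' kap_enc pw_shift pe by simp
  then have "occurs_at (ww f a b) (pw ?y N) (length (WW f a b ?s @ [b]))" by (rule ww_occurs2)
  then show ?thesis unfolding is_factor_def pw_def by blast
qed

lemma primitive_y:
  assumes "a \<noteq> b"
  shows "primitive (WW f a b k @ [b])"
  unfolding primitive_def
proof (intro conjI notI)
  show "WW f a b k @ [b] = [] \<Longrightarrow> False" by simp
next
  assume "\<exists>z m. 2 \<le> m \<and> WW f a b k @ [b] = concat (replicate m z)"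
  then obtain z m where m: "2 \<le> m" and e: "WW f a b k @ [b] = pw z m" unfolding pw_def by auto
  have "count_list (pw z m) b = count_list (pw z m) a + 1"
    unfolding e[symmetric] using WW_count[OF assms, of f k] assms by simp
  then have "m * count_list z b = m * count_list z a + 1" by (simp add: count_pw)
  then have "m dvd 1" by (metis dvd_add_right_iff dvd_triv_left)
  then show False using m by simp
qed

lemma ww_recurrent: "recurrent (ww f a b)"
  unfolding recurrent_def
proof (intro allI impI)
  fix x assume "is_factor (ww f a b) x"
  then obtain i where oc: "occurs_at (ww f a b) x i" unfolding is_factor_def by auto
  let ?n = "length x"
  let ?t = "i + ?n"
  have lt: "i + ?n \<le> length (WW f a b ?t)" using WW_len_ge[of ?t f a b] by simp
  have xe: "x = take ?n (drop i (WW f a b ?t))" using oc ww_occurs[OF lt] by simp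
  show "infinite {i. occurs_at (ww f a b) x i}"
    unfolding infinite_nat_iff_unbounded_le
  proof
    fix m
    let ?s = "max ?t m"
    let ?M = "pw (b # WW f a b (kap ?s)) (Suc (RR f a b ?s)) @ pw (a # WW f a b (kap ?s)) (RR f a b ?s) @ [a]"
    obtain r where r: "WW f a b ?s = WW f a b ?t @ r" using WW_prefix[of ?t ?s f a b] by auto
    have sp: "WW f a b ?t = take i (WW f a b ?t) @ x @ drop (i + ?n) (WW f a b ?t)"
    proof -
      have "drop i (WW f a b ?t) = take ?n (drop i (WW f a b ?t)) @ drop ?n (drop i (WW f a b ?t))"
        by (rule append_take_drop_id[symmetric])
      then have "drop i (WW f a b ?t) = x @ drop (i + ?n) (WW f a b ?t)"
        using xe by (simp add: add.commute)
      then show ?thesis by (metis append_take_drop_id)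
    qed
    have e: "WW f a b (Suc ?s) = (WW f a b ?s @ ?M @ take i (WW f a b ?t)) @ x @ (drop (i + ?n) (WW f a b ?t) @ r)"
    proof -
      have "WW f a b (Suc ?s) = WW f a b ?s @ ?M @ WW f a b ?t @ r"
        unfolding WW_Suc'[of f a b ?s] r by simp
      also have "\<dots> = (WW f a b ?s @ ?M @ take i (WW f a b ?t)) @ x @ (drop (i + ?n) (WW f a b ?t) @ r)"
        by (subst sp) simp
      finally show ?thesis .
    qed
    have "occurs_at (ww f a b) x (length (WW f a b ?s @ ?M @ take i (WW f a b ?t)))" using ww_occurs2[OF e] .
    moreover have "m \<le> length (WW f a b ?s @ ?M @ take i (WW f a b ?t))" using WW_len_ge[of ?s f a b] by simp
    ultimately show "\<exists>p\<ge>m. p \<in> {i. occurs_at (ww f a b) x i}" by blast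
  qed
qed



lemma div_bound: "0 < (L::nat) \<Longrightarrow> n + L \<le> (n div L + 2) * L"
proof -
  assume L: "0 < L"
  have e: "L * (n div L) + n mod L = n" by (rule mult_div_mod_eq)
  have "n mod L < L" using L by simp
  then have "n + L \<le> L * (n div L) + 2 * L" using e by linarith
  then show ?thesis by (simp add: algebra_simps)
qed

lemma div_bound2: "0 < (L::nat) \<Longrightarrow> L \<le> n \<Longrightarrow> (n div L + 2) * L \<le> 3 * n"
proof -
  assume L: "0 < L" "L \<le> n"
  have e: "L * (n div L) + n mod L = n" by (rule mult_div_mod_eq)
  then have "L * (n div L) + 2 * L \<le> 3 * n" using L by linarith
  then show ?thesis by (simp add: algebra_simps)
qed

lemma sfx_append: "n \<le> length v \<Longrightarrow> sfx n (u @ v) = sfx n v"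
  unfolding sfx_def by simp

lemma complexity_bound:
  assumes hf: "\<And>j m. Nf f j \<le> m \<Longrightarrow> 10 * (j + 2) \<le> f m"
    and n1: "1 \<le> n" and nN: "Nf f 1 \<le> n"
  shows "complexity (ww f a b) n \<le> n * f n"
proof -
  let ?W = "WW f a b"
  have ex: "\<exists>s. n \<le> length (?W s)" using WW_len_ge[of n f a b] by blast
  define \<sigma> where "\<sigma> = (LEAST s. n \<le> length (?W s))"
  have nW: "n \<le> length (?W \<sigma>)" unfolding \<sigma>_def using LeastI_ex[OF ex] .
  have small: "k < \<sigma> \<Longrightarrow> length (?W k) < n" for k
    unfolding \<sigma>_def using not_less_Least by (metis not_le)
  have "\<sigma> \<noteq> 0" using nW n1 by (cases \<sigma>) auto
  then obtain s' where s': "\<sigma> = Suc s'" by (cases \<sigma>) auto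
  define P where "P = take n (?W \<sigma>)"
  define Q where "Q = sfx n (?W \<sigma>)"
  have lP: "length P = n" and lQ: "length Q = n" using nW unfolding P_def Q_def sfx_def by auto
  define c where "c k = n div (length (?W k) + 1) + 2" for k
  define G where "G k = pw (b # ?W k) (c k) @ pw (a # ?W k) (c k) @ [a]" for k
  define S where "S = Fac n (?W \<sigma>) \<union> Fac n (Q @ [a] @ P) \<union> Fac n (Q @ [b] @ P)
     \<union> (\<Union>k\<in>{..<\<sigma>}. Fac n (Q @ G k @ P))"
  have cb: "n + length (x # ?W k) \<le> c k * length (x # ?W k)" for x k
    unfolding c_def using div_bound[of "length (?W k) + 1" n] by simp
  have cle: "c k \<le> n + 2" for k unfolding c_def by simp
  have pump: "Fac n (U @ pw (b # ?W k) (Suc R) @ pw (a # ?W k) R @ [a] @ V)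
     \<subseteq> Fac n (U @ pw (b # ?W k) (min (Suc R) (c k)) @ pw (a # ?W k) (min R (c k)) @ [a] @ V)" for U V k R
  proof -
    have "Fac n (U @ pw (b # ?W k) (Suc R) @ (pw (a # ?W k) R @ [a] @ V))
        \<subseteq> Fac n (U @ pw (b # ?W k) (min (Suc R) (c k)) @ (pw (a # ?W k) R @ [a] @ V))"
      by (rule Fac_pump[OF cb])
    also have "\<dots> = Fac n ((U @ pw (b # ?W k) (min (Suc R) (c k))) @ pw (a # ?W k) R @ ([a] @ V))"
      by simp
    also have "\<dots> \<subseteq> Fac n ((U @ pw (b # ?W k) (min (Suc R) (c k))) @ pw (a # ?W k) (min R (c k)) @ ([a] @ V))"
      by (rule Fac_pump[OF cb])
    finally show ?thesis by simp
  qed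
  have SQP: "Fac n (Q @ [x] @ P) \<subseteq> S" if "x = a \<or> x = b" for x
    using that unfolding S_def by auto
  have goodS: "Good n P Q S (?W \<sigma>)"
    unfolding Good_def using nW unfolding P_def Q_def S_def by auto
  have stp: "Good n P Q S (?W (Suc t))"
    if t: "\<sigma> \<le> t" and gt: "Good n P Q S (?W t)" and gk: "\<sigma> \<le> kap t \<Longrightarrow> Good n P Q S (?W (kap t))" for t
  proof (cases "\<sigma> \<le> kap t")
    case True
    have e: "?W (Suc t) = ((?W t @ pw (b # ?W (kap t)) (Suc (RR f a b t))) @ pw (a # ?W (kap t)) (RR f a b t)) @ a # ?W t"
      unfolding WW_Suc' by simp
    show ?thesis unfolding e
      by (intro Good_join Good_pw gt gk[OF True] SQP) auto
  next
    case False
    let ?k = "kap t" let ?R = "RR f a b t"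
    let ?M = "pw (b # ?W ?k) (Suc ?R) @ pw (a # ?W ?k) ?R @ [a]"
    have ntl: "n \<le> length (?W t)" using gt unfolding Good_def by simp
    have Rc: "c ?k \<le> ?R" using cle[of ?k] RR_ge(1)[of f a b t] ntl by linarith
    have e: "?W (Suc t) = ?W t @ ?M @ ?W t" unfolding WW_Suc' by simp
    have "Fac n (?W (Suc t)) \<subseteq> Fac n (?W t) \<union> Fac n (?W t) \<union> Fac n (sfx n (?W t) @ ?M @ take n (?W t))"
      unfolding e by (rule Fac_3)
    moreover have "sfx n (?W t) = Q" "take n (?W t) = P" using gt unfolding Good_def by auto
    moreover have "Fac n (Q @ ?M @ P) \<subseteq> Fac n (Q @ G ?k @ P)"
    proof -
      have "Fac n (Q @ ?M @ P) \<subseteq> Fac n (Q @ pw (b # ?W ?k) (min (Suc ?R) (c ?k)) @ pw (a # ?W ?k) (min ?R (c ?k)) @ [a] @ P)"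
        using pump[of Q ?k ?R P] by simp
      moreover have "min (Suc ?R) (c ?k) = c ?k" "min ?R (c ?k) = c ?k" using Rc by auto
      ultimately show ?thesis unfolding G_def by simp
    qed
    moreover have "Fac n (Q @ G ?k @ P) \<subseteq> S" using False unfolding S_def by auto
    ultimately have "Fac n (?W (Suc t)) \<subseteq> S" using gt unfolding Good_def by blast
    moreover have "take n (?W (Suc t)) = P" using gt ntl unfolding e Good_def by simp
    moreover have "sfx n (?W (Suc t)) = Q"
    proof -
      have "sfx n (?W (Suc t)) = sfx n ((?W t @ ?M) @ ?W t)" unfolding e by simp
      also have "\<dots> = sfx n (?W t)" using ntl by (rule sfx_append)
      finally show ?thesis using gt unfolding Good_def by simp
    qed
    moreover have "n \<le> length (?W (Suc t))" using ntl unfolding e by simp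
    ultimately show ?thesis unfolding Good_def by simp
  qed
  have allgood: "\<forall>j. \<sigma> \<le> j \<and> j \<le> t \<longrightarrow> Good n P Q S (?W j)" if "\<sigma> \<le> t" for t
    using that
  proof (induction t rule: dec_induct)
    case base then show ?case using goodS by (auto simp: le_antisym)
  next
    case (step t)
    have "Good n P Q S (?W (Suc t))"
      using step.hyps step.IH kap_le[of t] stp[of t] by auto
    then show ?case using step.IH le_Suc_eq by auto
  qed
  have facS: "factors_of_length (ww f a b) n \<subseteq> S"
  proof
    fix x assume "x \<in> factors_of_length (ww f a b) n"
    then obtain i where lx: "length x = n" and oc: "occurs_at (ww f a b) x i"
      unfolding factors_of_length_def is_factor_def by auto
    let ?t = "max \<sigma> (i + n)"
    have lt: "i + length x \<le> length (?W ?t)" using WW_len_ge[of ?t f a b] lx by simp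
    have "x = take n (drop i (?W ?t))" using oc ww_occurs[OF lt] lx by simp
    then have "x \<in> Fac n (?W ?t)" using lt lx unfolding Fac_def by auto
    moreover have "Good n P Q S (?W ?t)" using allgood[of ?t] by auto
    ultimately show "x \<in> S" unfolding Good_def by auto
  qed
  have cG: "card (Fac n (Q @ G k @ P)) \<le> 8 * n + 2" if "k < \<sigma>" for k
  proof -
    have "length (?W k) < n" using small[OF that] .
    then have "c k * (length (?W k) + 1) \<le> 3 * n"
      unfolding c_def using div_bound2[of "length (?W k) + 1" n] by simp
    then have "length (G k) \<le> 6 * n + 1" unfolding G_def by simp
    then show ?thesis using Fac_card[of n "Q @ G k @ P"] lP lQ by simp
  qed
  have cQP: "card (Fac n (Q @ [x] @ P)) \<le> 2 * n + 2" for x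
    using Fac_card[of n "Q @ [x] @ P"] lP lQ by simp
  have cW: "card (Fac n (?W \<sigma>)) \<le> 8 * n + 2"
  proof -
    let ?k = "kap s'" let ?R = "RR f a b s'"
    let ?H = "?W s' @ pw (b # ?W ?k) (min (Suc ?R) (c ?k)) @ pw (a # ?W ?k) (min ?R (c ?k)) @ [a] @ ?W s'"
    have "Fac n (?W \<sigma>) \<subseteq> Fac n ?H" unfolding s' WW_Suc' by (rule pump)
    moreover have "length ?H \<le> 8 * n + 1"
    proof -
      have ks: "?k < \<sigma>" using kap_le[of s'] s' by simp
      have l1: "length (?W s') < n" using small s' by simp
      have l2: "length (?W ?k) < n" using small[OF ks] .
      have "c ?k * (length (?W ?k) + 1) \<le> 3 * n"
        unfolding c_def using div_bound2[of "length (?W ?k) + 1" n] l2 by simp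
      then have "min (Suc ?R) (c ?k) * (length (?W ?k) + 1) \<le> 3 * n"
        "min ?R (c ?k) * (length (?W ?k) + 1) \<le> 3 * n"
        by (meson le_trans min.cobounded2 mult_le_mono1)+
      then show ?thesis using l1 by simp
    qed
    ultimately have "card (Fac n (?W \<sigma>)) \<le> card (Fac n ?H)" "length ?H \<le> 8 * n + 1"
      by (auto intro: card_mono[OF Fac_finite])
    then show ?thesis using Fac_card[of n ?H] by linarith
  qed
  have cS: "card S \<le> (\<sigma> + 2) * (8 * n + 2)"
  proof -
    have "card (\<Union>k\<in>{..<\<sigma>}. Fac n (Q @ G k @ P)) \<le> (\<Sum>k\<in>{..<\<sigma>}. card (Fac n (Q @ G k @ P)))"
      by (rule card_UN_le) simp
    also have "\<dots> \<le> (\<Sum>k\<in>{..<\<sigma>}. 8 * n + 2)" by (rule sum_mono) (use cG in auto)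
    also have "\<dots> = \<sigma> * (8 * n + 2)" by simp
    finally have u: "card (\<Union>k\<in>{..<\<sigma>}. Fac n (Q @ G k @ P)) \<le> \<sigma> * (8 * n + 2)" .
    have c1: "card S \<le> card (Fac n (?W \<sigma>) \<union> Fac n (Q @ [a] @ P) \<union> Fac n (Q @ [b] @ P))
       + card (\<Union>k\<in>{..<\<sigma>}. Fac n (Q @ G k @ P))"
      unfolding S_def by (rule card_Un_le)
    have c2: "card (Fac n (?W \<sigma>) \<union> Fac n (Q @ [a] @ P) \<union> Fac n (Q @ [b] @ P))
      \<le> card (Fac n (?W \<sigma>) \<union> Fac n (Q @ [a] @ P)) + card (Fac n (Q @ [b] @ P))"
      by (rule card_Un_le)
    have c3: "card (Fac n (?W \<sigma>) \<union> Fac n (Q @ [a] @ P)) \<le> card (Fac n (?W \<sigma>)) + card (Fac n (Q @ [a] @ P))"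
      by (rule card_Un_le)
    have "card S \<le> card (Fac n (?W \<sigma>)) + card (Fac n (Q @ [a] @ P)) + card (Fac n (Q @ [b] @ P))
       + card (\<Union>k\<in>{..<\<sigma>}. Fac n (Q @ G k @ P))" using c1 c2 c3 by linarith
    then show ?thesis using u cW cQP[of a] cQP[of b] n1 by (simp add: algebra_simps)
  qed
  have fS: "finite S" unfolding S_def by (auto simp: Fac_finite)
  have "10 * (\<sigma> + 2) \<le> f n"
  proof (cases s')
    case 0 then show ?thesis using hf[OF nN] s' by simp
  next
    case (Suc s'')
    have "Nf f (s'' + 2) \<le> length (?W s')"
      using RR_ge(2)[of f s'' a b] WW_len_Suc[of f a b s''] Suc by simp
    moreover have "length (?W s') < n" using small s' by simp
    ultimately have "Nf f \<sigma> \<le> n" using s' Suc by simp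
    then show ?thesis using hf by blast
  qed
  have "complexity (ww f a b) n \<le> card S"
    unfolding complexity_def using card_mono[OF fS facS] .
  also have "\<dots> \<le> (\<sigma> + 2) * (10 * n)" using cS n1 mult_le_mono2[of "8*n+2" "10*n" "\<sigma>+2"]
    by linarith
  also have "\<dots> = n * (10 * (\<sigma> + 2))" by (simp add: algebra_simps)
  also have "\<dots> \<le> n * f n" using \<open>10 * (\<sigma> + 2) \<le> f n\<close> by simp
  finally show ?thesis .
qed



theorem theorem3:
  fixes f :: "nat \<Rightarrow> nat" and \<Sigma> :: "'a set"
  assumes "filterlim f at_top at_top"
    and "finite \<Sigma>" and "card \<Sigma> \<ge> 2"
  shows "\<exists>w :: nat \<Rightarrow> 'a. range w \<subseteq> \<Sigma> \<and> recurrent w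
           \<and> (\<forall>\<^sub>F n in sequentially. complexity w n \<le> n * f n)
           \<and> infinite {y. primitive y \<and> is_factor w y
                          \<and> (\<forall>n\<ge>1. is_factor w (concat (replicate n y)))}"
proof -
  obtain a b where ab: "a \<in> \<Sigma>" "b \<in> \<Sigma>" "a \<noteq> b"
  proof -
    have "\<Sigma> \<noteq> {}" using assms(3) by auto
    then obtain x where x: "x \<in> \<Sigma>" by blast
    have "\<Sigma> - {x} \<noteq> {}"
    proof
      assume "\<Sigma> - {x} = {}"
      then have "\<Sigma> \<subseteq> {x}" by auto
      then have "card \<Sigma> \<le> 1" using card_mono[of "{x}" \<Sigma>] by simp
      then show False using assms(3) by simp
    qed
    then obtain y where y: "y \<in> \<Sigma>" "y \<noteq> x" by blast
    show ?thesis using that[OF x y(1)] y(2) by blast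
  qed
  have hf: "\<And>j m. Nf f j \<le> m \<Longrightarrow> 10 * (j + 2) \<le> f m"
  proof -
    fix j m assume jm: "Nf f j \<le> m"
    have "eventually (\<lambda>x. 10 * (j + 2) \<le> f x) sequentially"
      using assms(1) unfolding filterlim_at_top by blast
    then have ex: "\<exists>N. \<forall>m\<ge>N. 10 * (j + 2) \<le> f m" unfolding eventually_sequentially .
    have "\<forall>m\<ge>Nf f j. 10 * (j + 2) \<le> f m" unfolding Nf_def by (rule LeastI_ex[OF ex])
    then show "10 * (j + 2) \<le> f m" using jm by blast
  qed
  let ?w = "ww f a b"
  have range: "range ?w \<subseteq> \<Sigma>"
  proof
    fix x assume "x \<in> range ?w"
    then obtain i where x: "x = ?w i" by auto
    have "i < length (WW f a b (Suc i))" using WW_len_ge[of "Suc i" f a b] by simp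
    then have "x \<in> set (WW f a b (Suc i))" unfolding x ww_def by simp
    then show "x \<in> \<Sigma>" using WW_set[of f a b "Suc i"] ab by auto
  qed
  have ev: "\<forall>\<^sub>F n in sequentially. complexity ?w n \<le> n * f n"
    unfolding eventually_sequentially
  proof (intro exI allI impI)
    fix n assume "max 1 (Nf f 1) \<le> n"
    then show "complexity ?w n \<le> n * f n" by (intro complexity_bound[OF hf]) auto
  qed
  let ?Y = "{y. primitive y \<and> is_factor ?w y \<and> (\<forall>n\<ge>1. is_factor ?w (concat (replicate n y)))}"
  have sub: "range (\<lambda>k. WW f a b k @ [b]) \<subseteq> ?Y"
  proof
    fix y assume "y \<in> range (\<lambda>k. WW f a b k @ [b])"
    then obtain k where y: "y = WW f a b k @ [b]" by auto
    have "is_factor ?w (concat (replicate 1 y))" unfolding y by (rule ww_powers)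
    then show "y \<in> ?Y" using y primitive_y[OF ab(3)] ww_powers[of f a b _ k] by simp
  qed
  have inj: "inj (\<lambda>k. WW f a b k @ [b])"
  proof (rule injI)
    fix k l assume e: "WW f a b k @ [b] = WW f a b l @ [b]"
    have sm: "strict_mono (\<lambda>k. length (WW f a b k))"
      unfolding strict_mono_Suc_iff
    proof
      fix k show "length (WW f a b k) < length (WW f a b (Suc k))"
        using WW_len_Suc[of f a b k] RR_ge(1)[of f a b k] by linarith
    qed
    have "length (WW f a b k) = length (WW f a b l)" using e by (metis butlast_snoc)
    then show "k = l" using strict_mono_eq[OF sm] by blast
  qed
  have "infinite ?Y" using infinite_super[OF sub range_inj_infinite[OF inj]] .
  then show ?thesis using range ww_recurrent[of f a b] ev by (intro exI[of _ ?w]) simp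
qed


end
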